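(* If $\mathcal A\subseteq J_q(n)$ has $|\mathcal A|=M\ge 2$ and minimum $L^1$-distance $2\delta$, then $\psi(\mathcal A)\subseteq[q]^n$ is a code of size $M$ with insdel distance $2\delta$.
   Context: $J_q(n)=\{(a_1,\dots,a_q)\in\mathbb Z_{\ge0}^q:\ \sum_{i=1}^q a_i=n\}$. The $L^1$-distance is $d_L(\mathbf a,\mathbf b)=\sum_{i=1}^q|a_i-b_i|$; the minimum $L^1$-distance of $\mathcal A$ is the minimum over distinct pairs. The map $\psi:J_q(n)\to[q]^n$ sends $(a_1,\dots,a_q)$ to the word consisting of $a_1$ copies of $1$, followed by $a_2$ copies of $2$, ..., followed by $a_q$ copies of $q$. The insdel distance $d_I(\mathbf u,\mathbf v)$ of $\mathbf u,\mathbf v\in[q]^n$ is the minimum number of insertions and deletions transforming one into the other (equivalently $2n-2\ell_{\rm LCS}(\mathbf u,\mathbf v)$, with $\ell_{\rm LCS}$ the length of a longest common subsequence); the insdel distance of a code is the minimum over distinct codewords. *)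

theory Defs
  imports Main "HOL-Library.Sublist"
begin

text \<open>Compositions: J_q(n), vectors of q nonnegative integers (as lists, index i
  corresponds to coordinate i+1) summing to n.\<close>
definition J :: "nat \<Rightarrow> nat \<Rightarrow> nat list set" where
  "J q n = {a. length a = q \<and> sum_list a = n}"

definition dL :: "nat list \<Rightarrow> nat list \<Rightarrow> nat" where
  "dL a b = (\<Sum>i<length a. nat \<bar>int (a ! i) - int (b ! i)\<bar>)"

definition min_dL :: "nat list set \<Rightarrow> nat" where
  "min_dL A = Min {dL a b | a b. a \<in> A \<and> b \<in> A \<and> a \<noteq> b}"

definition psi :: "nat list \<Rightarrow> nat list" where
  "psi a = concat (map (\<lambda>i. replicate (a ! i) (i + 1)) [0..<length a])"

definition lcs_len :: "'a list \<Rightarrow> 'a list \<Rightarrow> nat" where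
  "lcs_len u v = Max {length w | w. subseq w u \<and> subseq w v}"

definition dI :: "'a list \<Rightarrow> 'a list \<Rightarrow> nat" where
  "dI u v = length u + length v - 2 * lcs_len u v"

definition min_dI :: "'a list set \<Rightarrow> nat" where
  "min_dI C = Min {dI u v | u v. u \<in> C \<and> v \<in> C \<and> u \<noteq> v}"

end

theory Submission
  imports Defs
begin

fun psi' :: "nat \<Rightarrow> nat list \<Rightarrow> nat list" where
  "psi' k [] = []"
| "psi' k (x # xs) = replicate x k @ psi' (Suc k) xs"

lemma psi'_eq: "concat (map (\<lambda>i. replicate (a ! i) (i + k)) [0..<length a]) = psi' k a"
proof (induction a arbitrary: k)
  case Nil then show ?case by simp
next
  case (Cons x a)
  have "[0..<length (x # a)] = 0 # map Suc [0..<length a]"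
    by (simp add: upt_conv_Cons map_Suc_upt del: upt_Suc)
  then show ?case using Cons[of "Suc k"] by (simp add: o_def)
qed

lemma psi_eq: "psi a = psi' 1 a"
  unfolding psi_def using psi'_eq[of a 1] by simp

lemma psi'_length: "length (psi' k a) = sum_list a"
  by (induction a arbitrary: k) auto

lemma psi'_set: "set (psi' k a) \<subseteq> {k..<k + length a}"
proof (induction a arbitrary: k)
  case Nil then show ?case by simp
next
  case (Cons x a)
  show ?case using Cons.IH[of "Suc k"] by auto
qed

lemma count_rep: "count_list (replicate x k) k = x"
  by (induction x) auto

lemma psi'_count: "i < length a \<Longrightarrow> count_list (psi' k a) (k + i) = a ! i"
proof (induction a arbitrary: k i)
  case Nil then show ?case by simp
next
  case (Cons x a)
  show ?case
  proof (cases i)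
    case 0
    have "k \<notin> set (psi' (Suc k) a)" using psi'_set[of "Suc k" a] by auto
    then show ?thesis using 0 by (simp add: count_list_0_iff count_rep)
  next
    case (Suc j)
    have "k + i \<notin> set (replicate x k)" using Suc by auto
    then have "count_list (replicate x k) (k+i) = 0" by (simp add: count_list_0_iff)
    then show ?thesis using Cons.IH[of j "Suc k"] Suc Cons.prems by simp
  qed
qed

lemma subseq_count: "subseq w u \<Longrightarrow> count_list w x \<le> count_list u x"
  by (induction rule: list_emb.induct) auto

lemma subseq_rep: "m \<le> k \<Longrightarrow> subseq (replicate m x) (replicate k x)"
proof -
  assume "m \<le> k"
  then have "replicate k x = replicate m x @ replicate (k - m) x"
    by (metis le_add_diff_inverse replicate_add)
  moreover have "subseq (replicate m x @ []) (replicate m x @ replicate (k - m) x)"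
    by (rule list_emb_append_mono) auto
  ultimately show ?thesis by simp
qed

lemma psi'_min: "length a = length b \<Longrightarrow> subseq (psi' k (map2 min a b)) (psi' k a)"
proof (induction a arbitrary: b k)
  case Nil then show ?case by simp
next
  case (Cons x a)
  then obtain y b' where b: "b = y # b'" by (cases b) auto
  show ?case using Cons b
    by (auto intro!: list_emb_append_mono subseq_rep)
qed

lemma psi'_min2: "length a = length b \<Longrightarrow> subseq (psi' k (map2 min a b)) (psi' k b)"
proof -
  assume h: "length a = length b"
  have "map2 min a b = map2 min b a"
    using h by (induction a b rule: list_induct2) (auto simp: min.commute)
  then show ?thesis using psi'_min[of b a k] h by simp
qed

lemma subseq_set: "subseq w u \<Longrightarrow> set w \<subseteq> set u"
proof
  fix x assume "subseq w u" "x \<in> set w"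
  then have "count_list w x > 0" by (metis count_list_0_iff gr0I)
  then have "count_list u x > 0" using subseq_count[OF \<open>subseq w u\<close>, of x] by linarith
  then show "x \<in> set u" by (metis count_notin less_irrefl)
qed

lemma lcs_psi:
  assumes la: "length a = q" and lb: "length b = q"
  shows "lcs_len (psi a) (psi b) = (\<Sum>i<q. min (a ! i) (b ! i))"
proof -
  let ?S = "{length w | w. subseq w (psi a) \<and> subseq w (psi b)}"
  have fin: "finite ?S"
    by (rule finite_subset[of _ "{..length (psi a)}"]) (auto dest: list_emb_length)
  define w0 where "w0 = psi' 1 (map2 min a b)"
  have w0a: "subseq w0 (psi a)" unfolding w0_def psi_eq using psi'_min la lb by simp
  have w0b: "subseq w0 (psi b)" unfolding w0_def psi_eq using psi'_min2 la lb by simp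
  have "length w0 = sum_list (map2 min a b)" unfolding w0_def by (simp add: psi'_length)
  also have "\<dots> = (\<Sum>i<q. min (a ! i) (b ! i))"
    using la lb by (simp add: sum_list_sum_nth atLeast0LessThan)
  finally have w0len: "length w0 = (\<Sum>i<q. min (a ! i) (b ! i))" .
  have ub: "length w \<le> (\<Sum>i<q. min (a ! i) (b ! i))"
    if wa: "subseq w (psi a)" and wb: "subseq w (psi b)" for w
  proof -
    have "set w \<subseteq> set (psi a)" using subseq_set[OF wa] .
    also have "\<dots> \<subseteq> Suc ` {..<q}" 
    proof
      fix x assume "x \<in> set (psi a)"
      then have "1 \<le> x" "x < 1 + q" using psi'_set[of 1 a] la unfolding psi_eq by auto
      then have "x = Suc (x - 1)" "x - 1 < q" by auto
      then show "x \<in> Suc ` {..<q}" by blast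
    qed
    finally have "length w = sum (count_list w) (Suc ` {..<q})"
      by (simp add: sum_count_set)
    also have "\<dots> = (\<Sum>i<q. count_list w (Suc i))" by (simp add: sum.reindex)
    also have "\<dots> \<le> (\<Sum>i<q. min (a ! i) (b ! i))"
    proof (rule sum_mono)
      fix i assume "i \<in> {..<q}"
      then have i: "i < q" by simp
      have "count_list w (Suc i) \<le> a ! i"
        using subseq_count[OF wa, of "Suc i"] psi'_count[of i a 1] i la unfolding psi_eq by simp
      moreover have "count_list w (Suc i) \<le> b ! i"
        using subseq_count[OF wb, of "Suc i"] psi'_count[of i b 1] i lb unfolding psi_eq by simp
      ultimately show "count_list w (Suc i) \<le> min (a ! i) (b ! i)" by simp
    qed
    finally show ?thesis .
  qed
  show ?thesis unfolding lcs_len_def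
    by (rule Max_eqI[OF fin]) (use ub w0a w0b w0len in \<open>auto, metis\<close>)
qed

lemma dI_psi:
  assumes "a \<in> J q n" "b \<in> J q n"
  shows "dI (psi a) (psi b) = dL a b"
proof -
  have la: "length a = q" and lb: "length b = q" and sa: "sum_list a = n" and sb: "sum_list b = n"
    using assms by (auto simp: J_def)
  have sa': "(\<Sum>i<q. a ! i) = n" using sa la by (simp add: sum_list_sum_nth atLeast0LessThan)
  have sb': "(\<Sum>i<q. b ! i) = n" using sb lb by (simp add: sum_list_sum_nth atLeast0LessThan)
  have trm: "nat \<bar>int (a ! i) - int (b ! i)\<bar> + 2 * min (a ! i) (b ! i) = a ! i + b ! i" for i
    by auto
  have "dL a b + 2 * (\<Sum>i<q. min (a ! i) (b ! i)) = (\<Sum>i<q. a ! i) + (\<Sum>i<q. b ! i)"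
    unfolding dL_def la by (simp add: sum_distrib_left sum.distrib[symmetric] trm)
  moreover have "length (psi a) = n" "length (psi b) = n"
    using sa sb by (simp_all add: psi_eq psi'_length)
  ultimately show ?thesis unfolding dI_def lcs_psi[OF la lb] using sa' sb' by simp
qed

lemma psi_inj:
  assumes "a \<in> J q n" "b \<in> J q n" "psi a = psi b"
  shows "a = b"
proof (rule nth_equalityI)
  show "length a = length b" using assms by (simp add: J_def)
  fix i assume "i < length a"
  then show "a ! i = b ! i"
    using psi'_count[of i a 1] psi'_count[of i b 1] assms \<open>length a = length b\<close>
    unfolding psi_eq by simp
qed

theorem corollary4p2:
  fixes q n M \<delta> :: nat and A :: "nat list set"
  assumes "A \<subseteq> J q n"
    and "card A = M" and "M \<ge> 2"
    and "min_dL A = 2 * \<delta>"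
  shows "psi ` A \<subseteq> {w. length w = n \<and> set w \<subseteq> {1..q}} \<and>
         card (psi ` A) = M \<and>
         min_dI (psi ` A) = 2 * \<delta>"
proof (intro conjI)
  show "psi ` A \<subseteq> {w. length w = n \<and> set w \<subseteq> {1..q}}"
  proof
    fix w assume "w \<in> psi ` A"
    then obtain a where a: "a \<in> A" "w = psi a" by auto
    then have "a \<in> J q n" using assms(1) by auto
    then have "length a = q" "sum_list a = n" by (auto simp: J_def)
    then show "w \<in> {w. length w = n \<and> set w \<subseteq> {1..q}}"
      using a psi'_set[of 1 a] by (auto simp: psi_eq psi'_length)
  qed
  have inj: "inj_on psi A" using psi_inj assms(1) by (meson inj_onI subsetD)
  then show "card (psi ` A) = M" using assms(2) by (simp add: card_image)
  have "{dI u v | u v. u \<in> psi ` A \<and> v \<in> psi ` A \<and> u \<noteq> v}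
      = {dL a b | a b. a \<in> A \<and> b \<in> A \<and> a \<noteq> b}"
  proof (intro set_eqI iffI)
    fix d assume "d \<in> {dI u v | u v. u \<in> psi ` A \<and> v \<in> psi ` A \<and> u \<noteq> v}"
    then obtain a b where "a \<in> A" "b \<in> A" "psi a \<noteq> psi b" "d = dI (psi a) (psi b)" by blast
    moreover have "d = dL a b" using calculation dI_psi assms(1) by blast
    ultimately show "d \<in> {dL a b | a b. a \<in> A \<and> b \<in> A \<and> a \<noteq> b}" by blast
  next
    fix d assume "d \<in> {dL a b | a b. a \<in> A \<and> b \<in> A \<and> a \<noteq> b}"
    then obtain a b where ab: "a \<in> A" "b \<in> A" "a \<noteq> b" "d = dL a b" by blast
    then have "psi a \<noteq> psi b" using inj by (meson inj_on_eq_iff)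
    moreover have "d = dI (psi a) (psi b)" using ab dI_psi assms(1) by (metis subsetD)
    ultimately show "d \<in> {dI u v | u v. u \<in> psi ` A \<and> v \<in> psi ` A \<and> u \<noteq> v}"
      using ab by blast
  qed
  then show "min_dI (psi ` A) = 2 * \<delta>" using assms(4) unfolding min_dI_def min_dL_def by simp
qed

end
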